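(* Let $\alpha>0$, $0<q<\infty$, and let $\mu$ be a positive Borel measure on $\mathbb{C}$. If $\mu$ is an $(\infty,q)$ Fock-Carleson measure, then $\tilde{\mu}_t\in L^\infty(\mathbb{C},dA)$ for every $t>0$.
   Context: $F^\infty_\alpha$ is the space of entire functions $f$ with $\|f\|_{\infty,\alpha}=\sup_{z}|f(z)|e^{-\alpha|z|^2/2}<\infty$. $\mu$ is an $(\infty,q)$ Fock-Carleson measure if there is $C>0$ with $\left[\int_{\mathbb{C}}|f(z)e^{-\alpha|z|^2/2}|^q\,d\mu(z)\right]^{1/q}\le C\|f\|_{\infty,\alpha}$ for all $f\in F^\infty_\alpha$. For $t>0$, $\tilde{\mu}_t(z)=\frac{\alpha}{\pi}\int_{\mathbb{C}}e^{-\alpha t|z-w|^2/2}\,d\mu(w)$, and $dA$ is area measure. *)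

theory Defs
  imports "HOL-Analysis.Analysis"
begin

definition fock_weight :: "real \<Rightarrow> complex \<Rightarrow> real" where
  "fock_weight \<alpha> z = exp (- \<alpha> * (cmod z)\<^sup>2 / 2)"

definition in_fock_inf :: "real \<Rightarrow> (complex \<Rightarrow> complex) \<Rightarrow> bool" where
  "in_fock_inf \<alpha> f \<longleftrightarrow> f holomorphic_on UNIV \<and>
     bdd_above (range (\<lambda>z. cmod (f z) * fock_weight \<alpha> z))"

definition fock_inf_norm :: "real \<Rightarrow> (complex \<Rightarrow> complex) \<Rightarrow> real" where
  "fock_inf_norm \<alpha> f = (SUP z. cmod (f z) * fock_weight \<alpha> z)"

text \<open>(infty,q) Fock-Carleson measure: there is C>0 with
  (int |f e^{-alpha|z|^2/2}|^q dmu)^{1/q} <= C ||f||, written equivalently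
  as int |f e^{..}|^q dmu <= (C ||f||)^q in [0,infty].\<close>
definition fock_carleson_inf :: "real \<Rightarrow> real \<Rightarrow> complex measure \<Rightarrow> bool" where
  "fock_carleson_inf \<alpha> q \<mu> \<longleftrightarrow> (\<exists>C>0. \<forall>f. in_fock_inf \<alpha> f \<longrightarrow>
     (\<integral>\<^sup>+ z. ennreal ((cmod (f z) * fock_weight \<alpha> z) powr q) \<partial>\<mu>)
       \<le> ennreal ((C * fock_inf_norm \<alpha> f) powr q))"

text \<open>Berezin-type transform tilde mu_t (possibly infinite, hence ennreal).\<close>
definition mu_tilde :: "real \<Rightarrow> complex measure \<Rightarrow> real \<Rightarrow> complex \<Rightarrow> ennreal" where
  "mu_tilde \<alpha> \<mu> t z = ennreal (\<alpha> / pi) *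
     (\<integral>\<^sup>+ w. ennreal (exp (- \<alpha> * t * (cmod (z - w))\<^sup>2 / 2)) \<partial>\<mu>)"

definition ess_bounded_area :: "(complex \<Rightarrow> ennreal) \<Rightarrow> bool" where
  "ess_bounded_area g \<longleftrightarrow> (\<exists>M::real. AE z in lebesgue. g z \<le> ennreal M)"

end

theory Submission
  imports Defs
begin

lemma geo_sum_nat: "(\<integral>\<^sup>+ n. ennreal (exp (- real n)) \<partial>count_space UNIV) = ennreal (1 / (1 - exp (-1)))"
proof -
  have e: "exp (- real n) = exp (-1) ^ n" for n
    by (subst exp_of_nat_mult[symmetric]) simp
  have s: "summable (\<lambda>n. exp (-1::real) ^ n)" by (rule summable_geometric) simp
  have "(\<integral>\<^sup>+ n. ennreal (exp (- real n)) \<partial>count_space UNIV) = (\<Sum>n. ennreal (exp (-1) ^ n))"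
    by (simp add: nn_integral_count_space_nat e)
  also have "\<dots> = ennreal (\<Sum>n. exp (-1) ^ n)" by (rule suminf_ennreal2) (use s in auto)
  also have "(\<Sum>n. exp (-1::real) ^ n) = 1 / (1 - exp (-1))" by (subst suminf_geometric) auto
  finally show ?thesis .
qed

lemma int_sum_bound: "(\<integral>\<^sup>+ j. ennreal (exp (- \<bar>real_of_int j\<bar>)) \<partial>count_space UNIV) \<le> ennreal (2 / (1 - exp (-1)))"
proof -
  define f where "f j = ennreal (exp (- \<bar>real_of_int j\<bar>))" for j :: int
  define A where "A = range (int)"
  define B where "B = range (\<lambda>n. - int n)"
  have le: "f j \<le> f j * indicator A j + f j * indicator B j" for j
  proof (cases "j \<ge> 0")
    case True then have "j \<in> A" unfolding A_def by (intro range_eqI[of _ _ "nat j"]) simp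
    then show ?thesis by simp
  next
    case False then have "j \<in> B" unfolding B_def
      by (intro range_eqI[of _ _ "nat (- j)"]) simp
    then show ?thesis by simp
  qed
  have iA: "(\<integral>\<^sup>+ j. f j * indicator A j \<partial>count_space UNIV) = ennreal (1 / (1 - exp (-1)))"
  proof -
    have "(\<integral>\<^sup>+ j. f j * indicator A j \<partial>count_space UNIV) = (\<integral>\<^sup>+ j. f j \<partial>count_space A)"
      by (simp add: nn_integral_count_space_indicator A_def)
    also have "\<dots> = (\<integral>\<^sup>+ n. f (int n) \<partial>count_space UNIV)"
      by (rule nn_integral_bij_count_space[symmetric]) (auto simp: A_def bij_betw_def inj_on_def)
    also have "\<dots> = ennreal (1 / (1 - exp (-1)))" by (simp add: f_def geo_sum_nat)
    finally show ?thesis .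
  qed
  have iB: "(\<integral>\<^sup>+ j. f j * indicator B j \<partial>count_space UNIV) = ennreal (1 / (1 - exp (-1)))"
  proof -
    have "(\<integral>\<^sup>+ j. f j * indicator B j \<partial>count_space UNIV) = (\<integral>\<^sup>+ j. f j \<partial>count_space B)"
      by (simp add: nn_integral_count_space_indicator B_def)
    also have "\<dots> = (\<integral>\<^sup>+ n. f (- int n) \<partial>count_space UNIV)"
      by (rule nn_integral_bij_count_space[symmetric]) (auto simp: B_def bij_betw_def inj_on_def)
    also have "\<dots> = ennreal (1 / (1 - exp (-1)))" by (simp add: f_def geo_sum_nat)
    finally show ?thesis .
  qed
  have "(\<integral>\<^sup>+ j. f j \<partial>count_space UNIV) \<le> (\<integral>\<^sup>+ j. f j * indicator A j + f j * indicator B j \<partial>count_space UNIV)"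
    by (rule nn_integral_mono) (rule le)
  also have "\<dots> = (\<integral>\<^sup>+ j. f j * indicator A j \<partial>count_space UNIV) + (\<integral>\<^sup>+ j. f j * indicator B j \<partial>count_space UNIV)"
    by (rule nn_integral_add) auto
  also have "\<dots> = ennreal (2 / (1 - exp (-1)))"
    unfolding iA iB by (subst ennreal_plus[symmetric]) (auto simp: divide_simps)
  finally show ?thesis unfolding f_def .
qed

lemma shift_sum_bound:
  fixes x :: real
  shows "(\<integral>\<^sup>+ m. ennreal (exp (- \<bar>real_of_int m - x\<bar>)) \<partial>count_space UNIV) \<le> ennreal (exp 1 * (2 / (1 - exp (-1))))"
proof -
  define k where "k = \<lfloor>x\<rfloor>"
  have pt: "ennreal (exp (- \<bar>real_of_int m - x\<bar>)) \<le> ennreal (exp 1) * ennreal (exp (- \<bar>real_of_int (m - k)\<bar>))" for m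
  proof -
    have "\<bar>real_of_int (m - k)\<bar> \<le> \<bar>real_of_int m - x\<bar> + 1"
      using of_int_floor_le[of x] real_of_int_floor_add_one_gt[of x] unfolding k_def by (simp, smt (verit))
    then have "exp (- \<bar>real_of_int m - x\<bar>) \<le> exp 1 * exp (- \<bar>real_of_int (m - k)\<bar>)"
      by (simp add: exp_add[symmetric])
    then show ?thesis by (simp add: ennreal_mult[symmetric])
  qed
  have "(\<integral>\<^sup>+ m. ennreal (exp (- \<bar>real_of_int m - x\<bar>)) \<partial>count_space UNIV)
      \<le> (\<integral>\<^sup>+ m. ennreal (exp 1) * ennreal (exp (- \<bar>real_of_int (m - k)\<bar>)) \<partial>count_space UNIV)"
    by (rule nn_integral_mono) (rule pt)
  also have "\<dots> = ennreal (exp 1) * (\<integral>\<^sup>+ m. ennreal (exp (- \<bar>real_of_int (m - k)\<bar>)) \<partial>count_space UNIV)"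
    by (rule nn_integral_cmult) auto
  also have "(\<integral>\<^sup>+ m. ennreal (exp (- \<bar>real_of_int (m - k)\<bar>)) \<partial>count_space UNIV)
     = (\<integral>\<^sup>+ j. ennreal (exp (- \<bar>real_of_int j\<bar>)) \<partial>count_space UNIV)"
    by (rule nn_integral_bij_count_space[where f = "\<lambda>j. ennreal (exp (- \<bar>real_of_int j\<bar>))"])
      (rule bij_betwI[where g="\<lambda>j. j + k"], auto)
  also have "ennreal (exp 1) * \<dots> \<le> ennreal (exp 1) * ennreal (2 / (1 - exp (-1)))"
    by (intro mult_left_mono int_sum_bound) auto
  also have "\<dots> = ennreal (exp 1 * (2 / (1 - exp (-1))))"
  proof -
    have "exp (-1::real) < 1" by simp
    then have "0 \<le> 2 / (1 - exp (-1::real))" by simp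
    then show ?thesis by (rule ennreal_mult[symmetric, rotated]) simp
  qed
  finally show ?thesis .
qed


lemma gauss_test:
  fixes \<alpha> q C :: real and \<mu> :: "complex measure" and b :: complex
  assumes "\<alpha> > 0" "q > 0" "C > 0"
    and Cb: "\<forall>f. in_fock_inf \<alpha> f \<longrightarrow>
     (\<integral>\<^sup>+ z. ennreal ((cmod (f z) * fock_weight \<alpha> z) powr q) \<partial>\<mu>)
       \<le> ennreal ((C * fock_inf_norm \<alpha> f) powr q)"
  shows "(\<integral>\<^sup>+ w. ennreal (exp (- (q * \<alpha> / 2) * (cmod (w - b))\<^sup>2)) \<partial>\<mu>) \<le> ennreal (C powr q)"
proof -
  define f where "f z = exp (complex_of_real \<alpha> * cnj b * z - complex_of_real (\<alpha> * (cmod b)\<^sup>2 / 2))" for z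
  have id: "cmod (f z) * fock_weight \<alpha> z = exp (- \<alpha> * (cmod (z - b))\<^sup>2 / 2)" for z
  proof -
    have "cmod (f z) * fock_weight \<alpha> z
       = exp (\<alpha> * (Re b * Re z + Im b * Im z) - \<alpha> * (cmod b)\<^sup>2 / 2 + (- \<alpha> * (cmod z)\<^sup>2 / 2))"
      unfolding f_def fock_weight_def exp_add by (simp add: algebra_simps)
    also have "\<alpha> * (Re b * Re z + Im b * Im z) - \<alpha> * (cmod b)\<^sup>2 / 2 + (- \<alpha> * (cmod z)\<^sup>2 / 2)
       = - \<alpha> * (cmod (z - b))\<^sup>2 / 2"
      unfolding cmod_power2 by (simp add: power2_eq_square field_simps)
    finally show ?thesis .
  qed
  have le1: "exp (- \<alpha> * (cmod (z - b))\<^sup>2 / 2) \<le> 1" for z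
    using assms(1) by (simp add: zero_le_mult_iff)
  have fock: "in_fock_inf \<alpha> f"
    unfolding in_fock_inf_def
  proof
    show "f holomorphic_on UNIV" unfolding f_def by (intro holomorphic_intros)
    show "bdd_above (range (\<lambda>z. cmod (f z) * fock_weight \<alpha> z))"
      by (rule bdd_aboveI[of _ 1]) (use assms(1) in \<open>auto simp: id zero_le_mult_iff\<close>)
  qed
  have nrm: "fock_inf_norm \<alpha> f = 1"
    unfolding fock_inf_norm_def id
    by (rule cSup_eq_maximum) (use assms(1) in \<open>auto simp: zero_le_mult_iff image_iff intro!: bexI[of _ b]\<close>)
  have "(\<integral>\<^sup>+ w. ennreal (exp (- (q * \<alpha> / 2) * (cmod (w - b))\<^sup>2)) \<partial>\<mu>)
      = (\<integral>\<^sup>+ z. ennreal ((cmod (f z) * fock_weight \<alpha> z) powr q) \<partial>\<mu>)"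
    unfolding id by (rule nn_integral_cong) (simp add: powr_def algebra_simps)
  also have "\<dots> \<le> ennreal ((C * fock_inf_norm \<alpha> f) powr q)" using Cb fock by blast
  finally show ?thesis by (simp add: nrm)
qed


lemma lower_real:
  fixes a u s d1 d2 e :: real
  assumes "a > 0" "u > 0" "s \<ge> 0" "d1 \<le> s + 1/2" "d2 \<le> s + 1/2" "e \<le> 1"
  shows "exp (-1 - a - 2/u) * exp (- u * s\<^sup>2 / 2) \<le> exp (- d1) * exp (- d2) * exp (- a * e)"
proof -
  have q: "2 * s \<le> 2/u + u * s\<^sup>2 / 2"
  proof -
    have "2/u + u * s\<^sup>2 / 2 - 2 * s = (u * s - 2)\<^sup>2 / (2 * u)"
      using assms(2) by (simp add: field_simps power2_eq_square)
    also have "\<dots> \<ge> 0" using assms(2) by simp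
    finally show ?thesis by simp
  qed
  have "a * e \<le> a" using assms(1,6) by simp
  then have "-1 - a - 2/u + (- u * s\<^sup>2 / 2) \<le> - d1 + - d2 + - a * e"
    using q assms by linarith
  then show ?thesis unfolding exp_add[symmetric] by simp
qed

theorem theorem2p7:
  fixes \<alpha> q :: real and \<mu> :: "complex measure"
  assumes "\<alpha> > 0" and "q > 0"
    and "sets \<mu> = sets borel"
    and "fock_carleson_inf \<alpha> q \<mu>"
  shows "\<forall>t>0. ess_bounded_area (mu_tilde \<alpha> \<mu> t)"
proof (intro allI impI)
  fix t :: real assume t: "t > 0"
  obtain C where C: "C > 0" and Cb: "\<forall>f. in_fock_inf \<alpha> f \<longrightarrow>
     (\<integral>\<^sup>+ z. ennreal ((cmod (f z) * fock_weight \<alpha> z) powr q) \<partial>\<mu>)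
       \<le> ennreal ((C * fock_inf_norm \<alpha> f) powr q)"
    using assms(4) unfolding fock_carleson_inf_def by blast
  define a where "a = q * \<alpha> / 2"
  have a: "a > 0" using assms(1,2) by (simp add: a_def)
  have Gb: "(\<integral>\<^sup>+ w. ennreal (exp (- a * (cmod (w - b))\<^sup>2)) \<partial>\<mu>) \<le> ennreal (C powr q)" for b
    using gauss_test[OF assms(1,2) C Cb, of b] by (simp add: a_def)
  define Kb where "Kb = exp 1 * (2 / (1 - exp (-1::real)))"
  have Kb: "Kb \<ge> 0" unfolding Kb_def by simp
  define c where "c = exp (-1 - a - 2/(\<alpha> * t))"
  have c: "c > 0" unfolding c_def by simp
  show "ess_bounded_area (mu_tilde \<alpha> \<mu> t)"
    unfolding ess_bounded_area_def
  proof (intro exI[of _ "\<alpha> / pi * (1 / c) * (C powr q * (Kb * Kb))"] AE_I2)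
    fix z :: complex
    define x where "x = Re z"
    define y where "y = Im z"
    define E where "E m r = exp (- \<bar>real_of_int m - r\<bar>)" for m :: int and r :: real
    define G where "G p w = ennreal (E (fst p) x * E (snd p) y *
        exp (- a * (cmod (w - Complex (of_int (fst p)) (of_int (snd p))))\<^sup>2))" for p :: "int \<times> int" and w
    have lower: "ennreal c * ennreal (exp (- \<alpha> * t * (cmod (z - w))\<^sup>2 / 2)) \<le> (\<integral>\<^sup>+ p. G p w \<partial>count_space UNIV)" for w
    proof -
      define p0 where "p0 = (round (Re w), round (Im w))"
      define s where "s = cmod (z - w)"
      have r1: "\<bar>real_of_int (round (Re w)) - Re w\<bar> \<le> 1/2" by (rule of_int_round_abs_le)
      have r2: "\<bar>real_of_int (round (Im w)) - Im w\<bar> \<le> 1/2" by (rule of_int_round_abs_le)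
      have s1: "\<bar>Re w - x\<bar> \<le> s" unfolding s_def x_def
        using abs_Re_le_cmod[of "w - z"] by (simp add: norm_minus_commute)
      have s2: "\<bar>Im w - y\<bar> \<le> s" unfolding s_def y_def
        using abs_Im_le_cmod[of "w - z"] by (simp add: norm_minus_commute)
      have d1: "\<bar>real_of_int (fst p0) - x\<bar> \<le> s + 1/2" using r1 s1 unfolding p0_def fst_conv abs_le_iff by linarith
      have d2: "\<bar>real_of_int (snd p0) - y\<bar> \<le> s + 1/2" using r2 s2 unfolding p0_def snd_conv abs_le_iff by linarith
      have e: "(cmod (w - Complex (of_int (fst p0)) (of_int (snd p0))))\<^sup>2 \<le> 1"
      proof -
        have "(Re w - of_int (round (Re w)))\<^sup>2 \<le> (1/2)\<^sup>2"
          using r1 abs_le_square_iff[of "Re w - of_int (round (Re w))" "1/2"] by (simp add: abs_minus_commute)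
        moreover have "(Im w - of_int (round (Im w)))\<^sup>2 \<le> (1/2)\<^sup>2"
          using r2 abs_le_square_iff[of "Im w - of_int (round (Im w))" "1/2"] by (simp add: abs_minus_commute)
        ultimately show ?thesis unfolding cmod_power2 p0_def by (simp add: power2_eq_square)
      qed
      have "c * exp (- \<alpha> * t * (cmod (z - w))\<^sup>2 / 2)
          \<le> E (fst p0) x * E (snd p0) y * exp (- a * (cmod (w - Complex (of_int (fst p0)) (of_int (snd p0))))\<^sup>2)"
        unfolding c_def E_def
        using lower_real[OF a _ _ d1 d2 e, of "\<alpha> * t"] assms(1) t unfolding s_def
        by (simp add: mult.assoc)
      then have "ennreal c * ennreal (exp (- \<alpha> * t * (cmod (z - w))\<^sup>2 / 2)) \<le> G p0 w"
        unfolding G_def using c by (simp add: ennreal_mult[symmetric] ennreal_leI)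
      also have "G p0 w = (\<integral>\<^sup>+ p. G p w * indicator {p0} p \<partial>count_space UNIV)" by simp
      also have "\<dots> \<le> (\<integral>\<^sup>+ p. G p w \<partial>count_space UNIV)"
        by (intro nn_integral_mono) (auto split: split_indicator)
      finally show ?thesis .
    qed
    have meas: "G p \<in> borel_measurable \<mu>" for p
    proof -
      have "G p \<in> borel_measurable borel" unfolding G_def by measurable
      then show ?thesis by (simp add: measurable_cong_sets[OF assms(3) refl])
    qed
    have Tx: "(\<integral>\<^sup>+ m. ennreal (E m r) \<partial>count_space UNIV) \<le> ennreal Kb" for r
      unfolding E_def Kb_def by (rule shift_sum_bound)
    have prod: "(\<integral>\<^sup>+ p. ennreal (E (fst p) x * E (snd p) y) \<partial>count_space UNIV) \<le> ennreal (Kb * Kb)"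
    proof -
      have "(\<integral>\<^sup>+ p. ennreal (E (fst p) x * E (snd p) y) \<partial>count_space UNIV)
         = (\<integral>\<^sup>+ m. \<integral>\<^sup>+ n. ennreal (E m x) * ennreal (E n y) \<partial>count_space UNIV \<partial>count_space UNIV)"
        by (subst nn_integral_fst_count_space[symmetric]) (simp add: E_def ennreal_mult)
      also have "\<dots> = (\<integral>\<^sup>+ m. ennreal (E m x) * (\<integral>\<^sup>+ n. ennreal (E n y) \<partial>count_space UNIV) \<partial>count_space UNIV)"
        by (simp add: nn_integral_cmult)
      also have "\<dots> = (\<integral>\<^sup>+ m. ennreal (E m x) \<partial>count_space UNIV) * (\<integral>\<^sup>+ n. ennreal (E n y) \<partial>count_space UNIV)"
        by (simp add: nn_integral_multc)
      also have "\<dots> \<le> ennreal Kb * ennreal Kb"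
        by (intro mult_mono Tx) auto
      also have "\<dots> = ennreal (Kb * Kb)" using Kb by (simp add: ennreal_mult)
      finally show ?thesis .
    qed
    have upper: "(\<integral>\<^sup>+ w. (\<integral>\<^sup>+ p. G p w \<partial>count_space UNIV) \<partial>\<mu>) \<le> ennreal (C powr q * (Kb * Kb))"
    proof -
      have "(\<integral>\<^sup>+ w. (\<integral>\<^sup>+ p. G p w \<partial>count_space UNIV) \<partial>\<mu>)
          = (\<integral>\<^sup>+ p. (\<integral>\<^sup>+ w. G p w \<partial>\<mu>) \<partial>count_space UNIV)"
        by (rule nn_integral_count_space_nn_integral) (auto intro: meas)
      also have "\<dots> \<le> (\<integral>\<^sup>+ p. ennreal (E (fst p) x * E (snd p) y) * ennreal (C powr q) \<partial>count_space UNIV)"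
      proof (rule nn_integral_mono)
        fix p :: "int \<times> int"
        have "(\<integral>\<^sup>+ w. G p w \<partial>\<mu>) = (\<integral>\<^sup>+ w. ennreal (E (fst p) x * E (snd p) y) *
            ennreal (exp (- a * (cmod (w - Complex (of_int (fst p)) (of_int (snd p))))\<^sup>2)) \<partial>\<mu>)"
          unfolding G_def by (intro nn_integral_cong) (simp add: E_def ennreal_mult)
        also have "\<dots> = ennreal (E (fst p) x * E (snd p) y) * (\<integral>\<^sup>+ w.
            ennreal (exp (- a * (cmod (w - Complex (of_int (fst p)) (of_int (snd p))))\<^sup>2)) \<partial>\<mu>)"
        proof (rule nn_integral_cmult)
          have "(\<lambda>w. ennreal (exp (- a * (cmod (w - Complex (of_int (fst p)) (of_int (snd p))))\<^sup>2))) \<in> borel_measurable borel"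
            by measurable
          then show "(\<lambda>w. ennreal (exp (- a * (cmod (w - Complex (of_int (fst p)) (of_int (snd p))))\<^sup>2))) \<in> borel_measurable \<mu>"
            by (simp add: measurable_cong_sets[OF assms(3) refl])
        qed
        also have "\<dots> \<le> ennreal (E (fst p) x * E (snd p) y) * ennreal (C powr q)"
          by (intro mult_left_mono Gb) auto
        finally show "(\<integral>\<^sup>+ w. G p w \<partial>\<mu>) \<le> ennreal (E (fst p) x * E (snd p) y) * ennreal (C powr q)" .
      qed
      also have "\<dots> = (\<integral>\<^sup>+ p. ennreal (E (fst p) x * E (snd p) y) \<partial>count_space UNIV) * ennreal (C powr q)"
        by (rule nn_integral_multc) auto
      also have "\<dots> \<le> ennreal (Kb * Kb) * ennreal (C powr q)"
        by (intro mult_right_mono prod) auto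
      also have "\<dots> = ennreal (C powr q * (Kb * Kb))" using Kb by (simp add: ennreal_mult[symmetric] mult.commute)
      finally show ?thesis .
    qed
    have pt: "ennreal (exp (- \<alpha> * t * (cmod (z - w))\<^sup>2 / 2)) \<le> ennreal (1 / c) * (\<integral>\<^sup>+ p. G p w \<partial>count_space UNIV)" for w
    proof -
      have "ennreal (exp (- \<alpha> * t * (cmod (z - w))\<^sup>2 / 2)) = ennreal (1 / c) * (ennreal c * ennreal (exp (- \<alpha> * t * (cmod (z - w))\<^sup>2 / 2)))"
        using c by (simp add: ennreal_mult[symmetric])
      also have "\<dots> \<le> ennreal (1 / c) * (\<integral>\<^sup>+ p. G p w \<partial>count_space UNIV)"
        by (intro mult_left_mono lower) auto
      finally show ?thesis .
    qed
    have "mu_tilde \<alpha> \<mu> t z = ennreal (\<alpha> / pi) * (\<integral>\<^sup>+ w. ennreal (exp (- \<alpha> * t * (cmod (z - w))\<^sup>2 / 2)) \<partial>\<mu>)"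
      unfolding mu_tilde_def ..
    also have "\<dots> \<le> ennreal (\<alpha> / pi) * (\<integral>\<^sup>+ w. ennreal (1 / c) * (\<integral>\<^sup>+ p. G p w \<partial>count_space UNIV) \<partial>\<mu>)"
      by (intro mult_left_mono nn_integral_mono pt) auto
    also have "(\<integral>\<^sup>+ w. ennreal (1 / c) * (\<integral>\<^sup>+ p. G p w \<partial>count_space UNIV) \<partial>\<mu>)
        = ennreal (1 / c) * (\<integral>\<^sup>+ w. (\<integral>\<^sup>+ p. G p w \<partial>count_space UNIV) \<partial>\<mu>)"
    proof (rule nn_integral_cmult)
      have m1: "(\<lambda>pw. G (fst pw) (snd pw)) \<in> borel_measurable (count_space UNIV \<Otimes>\<^sub>M \<mu>)"
        using meas by (intro measurable_pair_measure_countable1) simp_all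
      have eq: "(\<lambda>(w, p). G p w) = (\<lambda>x. (\<lambda>pw. G (fst pw) (snd pw)) ((\<lambda>(x, y). (y, x)) x))"
        by (auto simp: fun_eq_iff)
      have m2: "(\<lambda>(w, p). G p w) \<in> borel_measurable (\<mu> \<Otimes>\<^sub>M count_space UNIV)"
        unfolding eq by (rule measurable_compose[OF measurable_pair_swap' m1])
      have sf: "sigma_finite_measure (count_space (UNIV :: (int \<times> int) set))"
        by (rule sigma_finite_measure_count_space_countable) simp
      have "(\<lambda>w. \<integral>\<^sup>+ p. G p w \<partial>count_space UNIV) \<in> borel_measurable \<mu>"
        by (rule sigma_finite_measure.borel_measurable_nn_integral[OF sf m2])
      then show "(\<lambda>w. \<integral>\<^sup>+ p. G p w \<partial>count_space UNIV) \<in> borel_measurable \<mu>" .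
    qed
    also have "ennreal (\<alpha> / pi) * (ennreal (1 / c) * (\<integral>\<^sup>+ w. (\<integral>\<^sup>+ p. G p w \<partial>count_space UNIV) \<partial>\<mu>))
        \<le> ennreal (\<alpha> / pi) * (ennreal (1 / c) * ennreal (C powr q * (Kb * Kb)))"
      by (intro mult_left_mono upper) auto
    also have "\<dots> = ennreal (\<alpha> / pi * (1 / c) * (C powr q * (Kb * Kb)))"
      using c Kb assms(1) by (simp add: ennreal_mult[symmetric] mult.assoc)
    finally show "mu_tilde \<alpha> \<mu> t z \<le> ennreal (\<alpha> / pi * (1 / c) * (C powr q * (Kb * Kb)))" .
  qed
qed

end
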